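(* Let $(\alpha_k)_{k\ge1}$ be a uniformly bounded sequence of positive reals, $\gamma_k:=\sum_{j=1}^k\frac1{\alpha_j}$ ($\gamma_0:=0$), let $\kappa>0$ and $\tau>0$ be constants, and for $\delta\ge0$, $k\ge1$ define $$e_k^n:=\delta^2\sum_{i=1}^k\Big(\frac{1}{\alpha_i^2}+\gamma_{i-1}^2\Big),\qquad e_k^r:=1+\sum_{i=1}^k\alpha_i^{-1}\gamma_i^{-\kappa}.$$ Define $k(\delta):=0$ if $e_1^n>\tau e_1^r$, and otherwise $k(\delta):=\max\{k\in\mathbb{N}:\ e_i^n\le\tau e_i^r\ \text{for all } i\le k\}$. Then for every $\delta>0$, $k(\delta)$ is well-defined and unique (in particular the maximum exists and is finite), and $k(\delta)\to\infty$ as $\delta\to0$.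
   Context: In the paper $\kappa$ is the exponent from an active set condition on a solution of the underlying optimization problem; for this statement only $\kappa>0$ matters. $\mathbb{N}=\{1,2,\dots\}$. *)

theory Defs
  imports Complex_Main
begin

text \<open>The sequence alpha is indexed from 1; the value alpha 0 is irrelevant.\<close>

definition gam :: "(nat \<Rightarrow> real) \<Rightarrow> nat \<Rightarrow> real" where
  "gam \<alpha> k = (\<Sum>j=1..k. 1 / \<alpha> j)"

definition e_n :: "(nat \<Rightarrow> real) \<Rightarrow> real \<Rightarrow> nat \<Rightarrow> real" where
  "e_n \<alpha> \<delta> k = \<delta>^2 * (\<Sum>i=1..k. 1 / (\<alpha> i)^2 + (gam \<alpha> (i - 1))^2)"

definition e_r :: "(nat \<Rightarrow> real) \<Rightarrow> real \<Rightarrow> nat \<Rightarrow> real" where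
  "e_r \<alpha> \<kappa> k = 1 + (\<Sum>i=1..k. (1 / \<alpha> i) * (gam \<alpha> i) powr (- \<kappa>))"

definition stop_set :: "(nat \<Rightarrow> real) \<Rightarrow> real \<Rightarrow> real \<Rightarrow> real \<Rightarrow> nat set" where
  "stop_set \<alpha> \<kappa> \<tau> \<delta> =
     {k. k \<ge> 1 \<and> (\<forall>i\<in>{1..k}. e_n \<alpha> \<delta> i \<le> \<tau> * e_r \<alpha> \<kappa> i)}"

definition kdelta :: "(nat \<Rightarrow> real) \<Rightarrow> real \<Rightarrow> real \<Rightarrow> real \<Rightarrow> nat" where
  "kdelta \<alpha> \<kappa> \<tau> \<delta> =
     (if e_n \<alpha> \<delta> 1 > \<tau> * e_r \<alpha> \<kappa> 1 then 0 else Max (stop_set \<alpha> \<kappa> \<tau> \<delta>))"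

end

theory Submission
  imports Defs
begin

lemma gam_Suc: "gam \<alpha> (Suc k) = gam \<alpha> k + 1 / \<alpha> (Suc k)"
  unfolding gam_def by simp

lemma gam_mono:
  assumes pos: "\<And>k. k \<ge> 1 \<Longrightarrow> \<alpha> k > 0" and "i \<le> j"
  shows "gam \<alpha> i \<le> gam \<alpha> j"
  using assms(2)
proof (induction j)
  case 0 then show ?case by simp
next
  case (Suc j)
  show ?case
  proof (cases "i = Suc j")
    case False
    then have "gam \<alpha> i \<le> gam \<alpha> j" using Suc by simp
    moreover have "0 < 1 / \<alpha> (Suc j)" using pos[of "Suc j"] by simp
    ultimately show ?thesis unfolding gam_Suc by linarith
  qed simp
qed

lemma gam_1: "gam \<alpha> 1 = 1 / \<alpha> 1" unfolding gam_def by simp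

lemma gam_lower:
  assumes pos: "\<And>k. k \<ge> 1 \<Longrightarrow> \<alpha> k > 0" and M: "\<forall>k\<ge>1. \<alpha> k \<le> M"
  shows "gam \<alpha> k \<ge> real k / M"
proof (induction k)
  case 0 then show ?case by (simp add: gam_def)
next
  case (Suc k)
  have a: "\<alpha> (Suc k) > 0" "\<alpha> (Suc k) \<le> M" using pos M by auto
  then have "1 / M \<le> 1 / \<alpha> (Suc k)" by (simp add: frac_le)
  then show ?case using Suc by (simp add: gam_Suc add_divide_distrib)
qed

lemma e_n_lower:
  assumes "k \<ge> 1"
  shows "e_n \<alpha> \<delta> k \<ge> \<delta>^2 * (gam \<alpha> k)^2 / 2"
proof -
  obtain m where k: "k = Suc m" using assms by (cases k) auto
  have nn: "\<And>i. 0 \<le> 1 / (\<alpha> i)^2 + (gam \<alpha> (i - 1))^2" by simp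
  have "1 / (\<alpha> k)^2 + (gam \<alpha> (k - 1))^2 \<le> (\<Sum>i=1..k. 1 / (\<alpha> i)^2 + (gam \<alpha> (i - 1))^2)"
    using assms by (intro member_le_sum[where f="\<lambda>i. 1 / (\<alpha> i)^2 + (gam \<alpha> (i - 1))^2"]) (simp_all only: nn atLeastAtMost_iff finite_atLeastAtMost order_refl)
  moreover have "(gam \<alpha> k)^2 / 2 \<le> 1 / (\<alpha> k)^2 + (gam \<alpha> (k - 1))^2"
  proof -
    have e: "gam \<alpha> k = gam \<alpha> m + 1 / \<alpha> k" using k gam_Suc by simp
    have q: "(x + y)^2 / 2 \<le> y^2 + x^2" for x y :: real
    proof -
      have "(x + y)^2 = 2 * (y^2 + x^2) - (x - y)^2" by (simp add: power2_eq_square algebra_simps)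
      moreover have "0 \<le> (x - y)^2" by simp
      ultimately have "(x + y)^2 \<le> 2 * (y^2 + x^2)" by linarith
      then show ?thesis by simp
    qed
    have "(gam \<alpha> m + 1 / \<alpha> k)^2 / 2 \<le> (1 / \<alpha> k)^2 + (gam \<alpha> m)^2" by (rule q)
    moreover have "(1 / \<alpha> k)^2 = 1 / (\<alpha> k)^2" by (rule power_one_over)
    moreover have "k - 1 = m" using k by simp
    ultimately show ?thesis using e by simp
  qed
  ultimately have "(gam \<alpha> k)^2 / 2 \<le> (\<Sum>i=1..k. 1 / (\<alpha> i)^2 + (gam \<alpha> (i - 1))^2)" by linarith
  then have "\<delta>^2 * ((gam \<alpha> k)^2 / 2) \<le> \<delta>^2 * (\<Sum>i=1..k. 1 / (\<alpha> i)^2 + (gam \<alpha> (i - 1))^2)"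
    by (rule mult_left_mono) simp
  then show ?thesis unfolding e_n_def by simp
qed

lemma e_r_upper:
  assumes pos: "\<And>k. k \<ge> 1 \<Longrightarrow> \<alpha> k > 0" and kappa: "\<kappa> > 0"
  shows "e_r \<alpha> \<kappa> k \<le> 1 + (1 / \<alpha> 1) powr (-\<kappa>) * gam \<alpha> k"
proof -
  have "(\<Sum>i=1..k. (1 / \<alpha> i) * (gam \<alpha> i) powr (- \<kappa>)) \<le> (\<Sum>i=1..k. (1 / \<alpha> 1) powr (-\<kappa>) * (1 / \<alpha> i))"
  proof (rule sum_mono)
    fix i assume i: "i \<in> {1..k}"
    have g: "gam \<alpha> 1 \<le> gam \<alpha> i" using i gam_mono[OF pos] by auto
    have p: "0 < 1 / \<alpha> 1" using pos[of 1] by simp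
    have g': "1 / \<alpha> 1 \<le> gam \<alpha> i" using g by (simp only: gam_1)
    have "(gam \<alpha> i) powr (-\<kappa>) \<le> (1 / \<alpha> 1) powr (-\<kappa>)"
      by (rule powr_mono2') (use g' p kappa in auto)
    moreover have "0 \<le> 1 / \<alpha> i" using pos[of i] i by simp
    ultimately show "(1 / \<alpha> i) * (gam \<alpha> i) powr (- \<kappa>) \<le> (1 / \<alpha> 1) powr (-\<kappa>) * (1 / \<alpha> i)"
      using mult_left_mono[of "(gam \<alpha> i) powr (-\<kappa>)" "(1 / \<alpha> 1) powr (-\<kappa>)" "1 / \<alpha> i"]
      by (simp only: mult.commute)
  qed
  also have "\<dots> = (1 / \<alpha> 1) powr (-\<kappa>) * gam \<alpha> k" by (simp add: gam_def sum_distrib_left)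
  finally show ?thesis unfolding e_r_def by simp
qed

lemma e_r_ge1:
  assumes pos: "\<And>k. k \<ge> 1 \<Longrightarrow> \<alpha> k > 0"
  shows "e_r \<alpha> \<kappa> k \<ge> 1"
proof -
  have "0 \<le> (\<Sum>i=1..k. (1 / \<alpha> i) * (gam \<alpha> i) powr (- \<kappa>))"
  proof (rule sum_nonneg)
    fix i assume "i \<in> {1..k}"
    then have "0 < \<alpha> i" using pos by auto
    then show "0 \<le> (1 / \<alpha> i) * (gam \<alpha> i) powr (- \<kappa>)" by simp
  qed
  then show ?thesis unfolding e_r_def by simp
qed

lemma stop_finite:
  assumes pos: "\<And>k. k \<ge> 1 \<Longrightarrow> \<alpha> k > 0" and M: "\<forall>k\<ge>1. \<alpha> k \<le> M"
    and kappa: "\<kappa> > 0" and tau: "\<tau> > 0" and d: "\<delta> > 0"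
  shows "\<exists>K. \<forall>j\<in>stop_set \<alpha> \<kappa> \<tau> \<delta>. j < K"
proof -
  have M0: "M > 0" using pos[of 1] M by force
  define C where "C = (1 / \<alpha> 1) powr (-\<kappa>)"
  have C0: "C \<ge> 0" unfolding C_def by simp
  define X where "X = 1 + 2 * (\<tau> + \<tau> * C) / \<delta>^2"
  have X1: "X \<ge> 1" unfolding X_def using tau C0 d by simp
  define K where "K = nat \<lceil>M * X\<rceil> + 1"
  have K1: "K \<ge> 1" unfolding K_def by simp
  have "real K \<ge> M * X" unfolding K_def by linarith
  then have "real K / M \<ge> X" using M0 by (simp add: field_simps)
  then have gX: "gam \<alpha> K \<ge> X" using gam_lower[OF pos M, of K] by linarith
  have viol: "e_n \<alpha> \<delta> K > \<tau> * e_r \<alpha> \<kappa> K"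
  proof -
    let ?g = "gam \<alpha> K"
    have g1: "?g \<ge> 1" using gX X1 by linarith
    have "\<tau> * e_r \<alpha> \<kappa> K \<le> \<tau> * (1 + C * ?g)"
      using e_r_upper[OF pos kappa, where k=K] tau unfolding C_def by simp
    also have "\<dots> \<le> (\<tau> + \<tau> * C) * ?g" using g1 tau C0 by (simp add: algebra_simps)
    also have "\<dots> < \<delta>^2 * X / 2 * ?g"
    proof -
      have "\<delta>^2 * X / 2 = \<delta>^2/2 + (\<tau> + \<tau> * C)" unfolding X_def using d by (simp add: field_simps)
      then have "\<tau> + \<tau> * C < \<delta>^2 * X / 2" using d by simp
      then show ?thesis using g1 by (intro mult_strict_right_mono) auto
    qed
    also have "\<dots> \<le> \<delta>^2 * ?g / 2 * ?g"
    proof (rule mult_right_mono)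
      show "\<delta>^2 * X / 2 \<le> \<delta>^2 * ?g / 2" using gX d by (simp add: divide_right_mono)
    qed (use g1 in simp)
    also have "\<dots> = \<delta>^2 * ?g^2 / 2" by (simp add: power2_eq_square)
    also have "\<dots> \<le> e_n \<alpha> \<delta> K" using e_n_lower[OF K1] .
    finally show ?thesis .
  qed
  show ?thesis
  proof (intro exI ballI)
    fix j assume "j \<in> stop_set \<alpha> \<kappa> \<tau> \<delta>"
    then have *: "\<forall>i\<in>{1..j}. e_n \<alpha> \<delta> i \<le> \<tau> * e_r \<alpha> \<kappa> i" unfolding stop_set_def by auto
    show "j < K"
    proof (rule ccontr)
      assume "\<not> j < K"
      then have "K \<in> {1..j}" using K1 by simp
      then show False using viol * by fastforce
    qed
  qed
qed

theorem mainTheorem2: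
  fixes \<alpha> :: "nat \<Rightarrow> real" and \<kappa> \<tau> :: real
  assumes pos: "\<And>k. k \<ge> 1 \<Longrightarrow> \<alpha> k > 0"
    and bdd: "\<exists>M. \<forall>k\<ge>1. \<alpha> k \<le> M"
    and kappa: "\<kappa> > 0" and tau: "\<tau> > 0"
  shows "(\<forall>\<delta>>0. \<not> (e_n \<alpha> \<delta> 1 > \<tau> * e_r \<alpha> \<kappa> 1) \<longrightarrow>
            (\<exists>k\<in>stop_set \<alpha> \<kappa> \<tau> \<delta>. \<forall>j\<in>stop_set \<alpha> \<kappa> \<tau> \<delta>. j \<le> k))
         \<and> filterlim (kdelta \<alpha> \<kappa> \<tau>) at_top (at_right 0)"
proof -
  obtain M where M: "\<forall>k\<ge>1. \<alpha> k \<le> M" using bdd by blast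
  have fin: "finite (stop_set \<alpha> \<kappa> \<tau> \<delta>)" if d: "\<delta> > 0" for \<delta>
  proof -
    obtain K where "\<forall>j\<in>stop_set \<alpha> \<kappa> \<tau> \<delta>. j < K" using stop_finite[OF pos M kappa tau d] by blast
    then have "stop_set \<alpha> \<kappa> \<tau> \<delta> \<subseteq> {..<K}" by auto
    then show ?thesis using finite_subset by blast
  qed
  have one: "1 \<in> stop_set \<alpha> \<kappa> \<tau> \<delta>" if "\<not> (e_n \<alpha> \<delta> 1 > \<tau> * e_r \<alpha> \<kappa> 1)" for \<delta>
    using that unfolding stop_set_def by auto
  have part1: "\<forall>\<delta>>0. \<not> (e_n \<alpha> \<delta> 1 > \<tau> * e_r \<alpha> \<kappa> 1) \<longrightarrow>
            (\<exists>k\<in>stop_set \<alpha> \<kappa> \<tau> \<delta>. \<forall>j\<in>stop_set \<alpha> \<kappa> \<tau> \<delta>. j \<le> k)"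
  proof (intro allI impI)
    fix \<delta> :: real assume d: "\<delta> > 0" and n: "\<not> (e_n \<alpha> \<delta> 1 > \<tau> * e_r \<alpha> \<kappa> 1)"
    have ne: "stop_set \<alpha> \<kappa> \<tau> \<delta> \<noteq> {}" using one[OF n] by auto
    show "\<exists>k\<in>stop_set \<alpha> \<kappa> \<tau> \<delta>. \<forall>j\<in>stop_set \<alpha> \<kappa> \<tau> \<delta>. j \<le> k"
      using Max_in[OF fin[OF d] ne] Max_ge[OF fin[OF d]] by blast
  qed
  have part2: "filterlim (kdelta \<alpha> \<kappa> \<tau>) at_top (at_right 0)"
    unfolding filterlim_at_top
  proof
    fix Z :: nat
    define N where "N = max Z 1"
    define S where "S = (\<Sum>i=1..N. \<bar>\<Sum>l=1..i. 1 / (\<alpha> l)^2 + (gam \<alpha> (l - 1))^2\<bar>) + 1"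
    have "0 \<le> (\<Sum>i=1..N. \<bar>\<Sum>l=1..i. 1 / (\<alpha> l)^2 + (gam \<alpha> (l - 1))^2\<bar>)"
      by (rule sum_nonneg) (rule abs_ge_zero)
    then have S0: "S > 0" unfolding S_def by linarith
    define b where "b = sqrt (\<tau> / S)"
    have b0: "b > 0" unfolding b_def using S0 tau by simp
    show "eventually (\<lambda>\<delta>. Z \<le> kdelta \<alpha> \<kappa> \<tau> \<delta>) (at_right 0)"
      unfolding eventually_at_right_field
    proof (intro exI[of _ b] conjI allI impI)
      show "0 < b" by (rule b0)
      fix \<delta> :: real assume d: "0 < \<delta>" and db: "\<delta> < b"
      have d2: "\<delta>^2 \<le> \<tau> / S"
      proof -
        have "\<delta>^2 \<le> b^2" using d db by (intro power_mono) auto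
        also have "b^2 = \<tau> / S" unfolding b_def using S0 tau by simp
        finally show ?thesis .
      qed
      have good: "e_n \<alpha> \<delta> i \<le> \<tau> * e_r \<alpha> \<kappa> i" if i: "i \<in> {1..N}" for i
      proof -
        let ?s = "\<Sum>l=1..i. 1 / (\<alpha> l)^2 + (gam \<alpha> (l - 1))^2"
        have "\<bar>?s\<bar> \<le> (\<Sum>i=1..N. \<bar>\<Sum>l=1..i. 1 / (\<alpha> l)^2 + (gam \<alpha> (l - 1))^2\<bar>)"
          using i by (intro member_le_sum) auto
        then have sS: "?s \<le> S" unfolding S_def by linarith
        have "e_n \<alpha> \<delta> i = \<delta>^2 * ?s" unfolding e_n_def by simp
        also have "\<dots> \<le> \<delta>^2 * S" using sS by (intro mult_left_mono) auto
        also have "\<dots> \<le> \<tau>" using d2 S0 by (simp add: field_simps)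
        also have "\<dots> \<le> \<tau> * e_r \<alpha> \<kappa> i" using e_r_ge1[OF pos, where \<kappa>=\<kappa> and k=i] tau by simp
        finally show ?thesis .
      qed
      have N1: "N \<ge> 1" unfolding N_def by simp
      have n: "\<not> (e_n \<alpha> \<delta> 1 > \<tau> * e_r \<alpha> \<kappa> 1)" using good[of 1] N1 by auto
      have "N \<in> stop_set \<alpha> \<kappa> \<tau> \<delta>" unfolding stop_set_def using good N1 by auto
      then have "N \<le> Max (stop_set \<alpha> \<kappa> \<tau> \<delta>)" using Max_ge[OF fin[OF d]] by blast
      then show "Z \<le> kdelta \<alpha> \<kappa> \<tau> \<delta>" unfolding kdelta_def N_def using n by simp
    qed
  qed
  show ?thesis using part1 part2 by blast
qed

end
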